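(* Let $R$ be a semiring, $i:M\to N$ a normal monomorphism of $R$-modules (identify $M$ with the saturated submodule $i(M)$ of $N$), and $L$ a saturated submodule of $M$. Then $L$ is a saturated submodule of $N$; the projections $\pi:M\to M/L$ and $\pi':N\to N/L$ are normal epimorphisms; the induced map $i':M/L\to N/L$, $[m]\mapsto[i(m)]$, is a well-defined normal monomorphism; and the commutative square with top $i$, left $\pi$, right $\pi'$, bottom $i'$ is both a pullback and a pushout in $\mathrm{Mod}_R$.
   Context: Semirings are commutative with $0,1$; an $R$-module is a commutative monoid with $R$-action. A submodule $N$ of $M$ is saturated if $x+y\in N$ and $y\in N$ imply $x\in N$. For a submodule $K\subseteq M$, $M/K$ is the set of classes of the congruence $x\sim y\iff x+k=y+k'$ for some $k,k'\in K$. A morphism is a normal monomorphism (resp. normal epimorphism) if it is the equalizer (resp. coequalizer) of some morphism and the zero map. *)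

theory Defs
  imports Main
begin

record ('r, 'a) smod =
  mcarrier :: "'a set"
  madd :: "'a \<Rightarrow> 'a \<Rightarrow> 'a"
  mzero :: 'a
  msmult :: "'r \<Rightarrow> 'a \<Rightarrow> 'a"

definition semimodule :: "('r::comm_semiring_1, 'a) smod \<Rightarrow> bool" where
  "semimodule M \<longleftrightarrow>
     mzero M \<in> mcarrier M \<and>
     (\<forall>x\<in>mcarrier M. \<forall>y\<in>mcarrier M. madd M x y \<in> mcarrier M) \<and>
     (\<forall>r. \<forall>x\<in>mcarrier M. msmult M r x \<in> mcarrier M) \<and>
     (\<forall>x\<in>mcarrier M. \<forall>y\<in>mcarrier M. \<forall>z\<in>mcarrier M.
        madd M (madd M x y) z = madd M x (madd M y z)) \<and>
     (\<forall>x\<in>mcarrier M. \<forall>y\<in>mcarrier M. madd M x y = madd M y x) \<and>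
     (\<forall>x\<in>mcarrier M. madd M x (mzero M) = x) \<and>
     (\<forall>r. \<forall>x\<in>mcarrier M. \<forall>y\<in>mcarrier M.
        msmult M r (madd M x y) = madd M (msmult M r x) (msmult M r y)) \<and>
     (\<forall>r s. \<forall>x\<in>mcarrier M. msmult M (r + s) x = madd M (msmult M r x) (msmult M s x)) \<and>
     (\<forall>r s. \<forall>x\<in>mcarrier M. msmult M (r * s) x = msmult M r (msmult M s x)) \<and>
     (\<forall>x\<in>mcarrier M. msmult M 1 x = x) \<and>
     (\<forall>x\<in>mcarrier M. msmult M 0 x = mzero M) \<and>
     (\<forall>r. msmult M r (mzero M) = mzero M)"

text \<open>Morphisms of R-modules; a morphism is a HOL function, only its values on
the carrier matter.\<close>

definition smod_hom :: "('r::comm_semiring_1, 'a) smod \<Rightarrow> ('r, 'b) smod \<Rightarrow> ('a \<Rightarrow> 'b) \<Rightarrow> bool" where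
  "smod_hom M N f \<longleftrightarrow>
     (\<forall>x\<in>mcarrier M. f x \<in> mcarrier N) \<and>
     (\<forall>x\<in>mcarrier M. \<forall>y\<in>mcarrier M. f (madd M x y) = madd N (f x) (f y)) \<and>
     f (mzero M) = mzero N \<and>
     (\<forall>r. \<forall>x\<in>mcarrier M. f (msmult M r x) = msmult N r (f x))"

definition submodule :: "('r::comm_semiring_1, 'a) smod \<Rightarrow> 'a set \<Rightarrow> bool" where
  "submodule M K \<longleftrightarrow> K \<subseteq> mcarrier M \<and> mzero M \<in> K \<and>
     (\<forall>x\<in>K. \<forall>y\<in>K. madd M x y \<in> K) \<and> (\<forall>r. \<forall>x\<in>K. msmult M r x \<in> K)"

definition saturated_submodule :: "('r::comm_semiring_1, 'a) smod \<Rightarrow> 'a set \<Rightarrow> bool" where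
  "saturated_submodule M K \<longleftrightarrow> submodule M K \<and>
     (\<forall>x\<in>mcarrier M. \<forall>y\<in>mcarrier M. madd M x y \<in> K \<and> y \<in> K \<longrightarrow> x \<in> K)"

definition qrel :: "('r, 'a) smod \<Rightarrow> 'a set \<Rightarrow> 'a \<Rightarrow> 'a \<Rightarrow> bool" where
  "qrel M K x y \<longleftrightarrow> x \<in> mcarrier M \<and> y \<in> mcarrier M \<and>
     (\<exists>k\<in>K. \<exists>k'\<in>K. madd M x k = madd M y k')"

definition qclass :: "('r, 'a) smod \<Rightarrow> 'a set \<Rightarrow> 'a \<Rightarrow> 'a set" where
  "qclass M K x = {y. qrel M K x y}"

definition quotient :: "('r, 'a) smod \<Rightarrow> 'a set \<Rightarrow> ('r, 'a set) smod" where
  "quotient M K =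
     \<lparr> mcarrier = qclass M K ` mcarrier M,
       madd = (\<lambda>A B. qclass M K (madd M (SOME a. a \<in> A) (SOME b. b \<in> B))),
       mzero = qclass M K (mzero M),
       msmult = (\<lambda>r A. qclass M K (msmult M r (SOME a. a \<in> A))) \<rparr>"

text \<open>The universal properties quantify over test objects P whose carrier lives in
the type 'p, given as an explicit type argument.\<close>

definition is_kernel ::
  "'p itself \<Rightarrow> ('r::comm_semiring_1, 'a) smod \<Rightarrow> ('r, 'b) smod \<Rightarrow> ('r, 'q) smod
     \<Rightarrow> ('a \<Rightarrow> 'b) \<Rightarrow> ('b \<Rightarrow> 'q) \<Rightarrow> bool" where
  "is_kernel (_ :: 'p itself) M N Q f g \<longleftrightarrow>
     semimodule M \<and> semimodule N \<and> semimodule Q \<and>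
     smod_hom M N f \<and> smod_hom N Q g \<and>
     (\<forall>x\<in>mcarrier M. g (f x) = mzero Q) \<and>
     (\<forall>(P :: ('r, 'p) smod) h. semimodule P \<and> smod_hom P N h \<and>
        (\<forall>x\<in>mcarrier P. g (h x) = mzero Q) \<longrightarrow>
        (\<exists>u. smod_hom P M u \<and> (\<forall>x\<in>mcarrier P. f (u x) = h x)) \<and>
        (\<forall>u v. smod_hom P M u \<and> smod_hom P M v \<and>
            (\<forall>x\<in>mcarrier P. f (u x) = h x) \<and> (\<forall>x\<in>mcarrier P. f (v x) = h x) \<longrightarrow>
            (\<forall>x\<in>mcarrier P. u x = v x)))"

definition is_cokernel ::
  "'p itself \<Rightarrow> ('r::comm_semiring_1, 'q) smod \<Rightarrow> ('r, 'a) smod \<Rightarrow> ('r, 'b) smod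
     \<Rightarrow> ('q \<Rightarrow> 'a) \<Rightarrow> ('a \<Rightarrow> 'b) \<Rightarrow> bool" where
  "is_cokernel (_ :: 'p itself) Q M N g f \<longleftrightarrow>
     semimodule Q \<and> semimodule M \<and> semimodule N \<and>
     smod_hom Q M g \<and> smod_hom M N f \<and>
     (\<forall>x\<in>mcarrier Q. f (g x) = mzero N) \<and>
     (\<forall>(P :: ('r, 'p) smod) h. semimodule P \<and> smod_hom M P h \<and>
        (\<forall>x\<in>mcarrier Q. h (g x) = mzero P) \<longrightarrow>
        (\<exists>u. smod_hom N P u \<and> (\<forall>x\<in>mcarrier M. u (f x) = h x)) \<and>
        (\<forall>u v. smod_hom N P u \<and> smod_hom N P v \<and>
            (\<forall>x\<in>mcarrier M. u (f x) = h x) \<and> (\<forall>x\<in>mcarrier M. v (f x) = h x) \<longrightarrow>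
            (\<forall>y\<in>mcarrier N. u y = v y)))"

definition is_pullback ::
  "'p itself \<Rightarrow> ('r::comm_semiring_1, 'a) smod \<Rightarrow> ('r, 'b) smod \<Rightarrow> ('r, 'c) smod \<Rightarrow> ('r, 'd) smod
     \<Rightarrow> ('a \<Rightarrow> 'b) \<Rightarrow> ('a \<Rightarrow> 'c) \<Rightarrow> ('b \<Rightarrow> 'd) \<Rightarrow> ('c \<Rightarrow> 'd) \<Rightarrow> bool" where
  "is_pullback (_ :: 'p itself) A B C D p q f g \<longleftrightarrow>
     semimodule A \<and> semimodule B \<and> semimodule C \<and> semimodule D \<and>
     smod_hom A B p \<and> smod_hom A C q \<and> smod_hom B D f \<and> smod_hom C D g \<and>
     (\<forall>x\<in>mcarrier A. f (p x) = g (q x)) \<and>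
     (\<forall>(P :: ('r, 'p) smod) h k. semimodule P \<and> smod_hom P B h \<and> smod_hom P C k \<and>
        (\<forall>x\<in>mcarrier P. f (h x) = g (k x)) \<longrightarrow>
        (\<exists>u. smod_hom P A u \<and> (\<forall>x\<in>mcarrier P. p (u x) = h x \<and> q (u x) = k x)) \<and>
        (\<forall>u v. smod_hom P A u \<and> smod_hom P A v \<and>
            (\<forall>x\<in>mcarrier P. p (u x) = h x \<and> q (u x) = k x) \<and>
            (\<forall>x\<in>mcarrier P. p (v x) = h x \<and> q (v x) = k x) \<longrightarrow>
            (\<forall>x\<in>mcarrier P. u x = v x)))"

definition is_pushout ::
  "'p itself \<Rightarrow> ('r::comm_semiring_1, 'a) smod \<Rightarrow> ('r, 'b) smod \<Rightarrow> ('r, 'c) smod \<Rightarrow> ('r, 'd) smod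
     \<Rightarrow> ('a \<Rightarrow> 'b) \<Rightarrow> ('a \<Rightarrow> 'c) \<Rightarrow> ('b \<Rightarrow> 'd) \<Rightarrow> ('c \<Rightarrow> 'd) \<Rightarrow> bool" where
  "is_pushout (_ :: 'p itself) A B C D p q f g \<longleftrightarrow>
     semimodule A \<and> semimodule B \<and> semimodule C \<and> semimodule D \<and>
     smod_hom A B p \<and> smod_hom A C q \<and> smod_hom B D f \<and> smod_hom C D g \<and>
     (\<forall>x\<in>mcarrier A. f (p x) = g (q x)) \<and>
     (\<forall>(P :: ('r, 'p) smod) h k. semimodule P \<and> smod_hom B P h \<and> smod_hom C P k \<and>
        (\<forall>x\<in>mcarrier A. h (p x) = k (q x)) \<longrightarrow>
        (\<exists>u. smod_hom D P u \<and> (\<forall>x\<in>mcarrier B. u (f x) = h x) \<and>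
             (\<forall>x\<in>mcarrier C. u (g x) = k x)) \<and>
        (\<forall>u v. smod_hom D P u \<and> smod_hom D P v \<and>
            (\<forall>x\<in>mcarrier B. u (f x) = h x) \<and> (\<forall>x\<in>mcarrier C. u (g x) = k x) \<and>
            (\<forall>x\<in>mcarrier B. v (f x) = h x) \<and> (\<forall>x\<in>mcarrier C. v (g x) = k x) \<longrightarrow>
            (\<forall>y\<in>mcarrier D. u y = v y)))"

end

theory Submission
  imports Defs
begin


lemma sm_zero: "semimodule X \<Longrightarrow> mzero X \<in> mcarrier X"
  by (simp add: semimodule_def)
lemma sm_add_closed: "semimodule X \<Longrightarrow> x \<in> mcarrier X \<Longrightarrow> y \<in> mcarrier X \<Longrightarrow> madd X x y \<in> mcarrier X"
  by (simp add: semimodule_def)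
lemma sm_smult_closed: "semimodule X \<Longrightarrow> x \<in> mcarrier X \<Longrightarrow> msmult X r x \<in> mcarrier X"
  by (simp add: semimodule_def)
lemma sm_assoc: "semimodule X \<Longrightarrow> x \<in> mcarrier X \<Longrightarrow> y \<in> mcarrier X \<Longrightarrow> z \<in> mcarrier X \<Longrightarrow>
   madd X (madd X x y) z = madd X x (madd X y z)"
  unfolding semimodule_def by blast
lemma sm_comm: "semimodule X \<Longrightarrow> x \<in> mcarrier X \<Longrightarrow> y \<in> mcarrier X \<Longrightarrow> madd X x y = madd X y x"
  by (simp add: semimodule_def)
lemma sm_lcomm: "semimodule X \<Longrightarrow> x \<in> mcarrier X \<Longrightarrow> y \<in> mcarrier X \<Longrightarrow> z \<in> mcarrier X \<Longrightarrow>
   madd X x (madd X y z) = madd X y (madd X x z)"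
  by (metis sm_assoc sm_comm)
lemma sm_rzero: "semimodule X \<Longrightarrow> x \<in> mcarrier X \<Longrightarrow> madd X x (mzero X) = x"
  by (simp add: semimodule_def)
lemma sm_lzero: "semimodule X \<Longrightarrow> x \<in> mcarrier X \<Longrightarrow> madd X (mzero X) x = x"
  by (metis sm_comm sm_rzero sm_zero)
lemma sm_smult_add: "semimodule X \<Longrightarrow> x \<in> mcarrier X \<Longrightarrow> y \<in> mcarrier X \<Longrightarrow>
   msmult X r (madd X x y) = madd X (msmult X r x) (msmult X r y)"
  by (simp add: semimodule_def)
lemma sm_add_smult: "semimodule X \<Longrightarrow> x \<in> mcarrier X \<Longrightarrow>
   msmult X (r + s) x = madd X (msmult X r x) (msmult X s x)"
  by (simp add: semimodule_def)
lemma sm_mult_smult: "semimodule X \<Longrightarrow> x \<in> mcarrier X \<Longrightarrow>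
   msmult X (r * s) x = msmult X r (msmult X s x)"
  by (simp add: semimodule_def)
lemma sm_one: "semimodule X \<Longrightarrow> x \<in> mcarrier X \<Longrightarrow> msmult X 1 x = x"
  by (simp add: semimodule_def)
lemma sm_zsmult: "semimodule X \<Longrightarrow> x \<in> mcarrier X \<Longrightarrow> msmult X 0 x = mzero X"
  by (simp add: semimodule_def)
lemma sm_smultz: "semimodule X \<Longrightarrow> msmult X r (mzero X) = mzero X"
  by (simp add: semimodule_def)

lemmas sm_simps = sm_zero sm_add_closed sm_smult_closed sm_assoc sm_comm sm_lcomm sm_rzero sm_lzero

lemma hom_closed: "smod_hom M N f \<Longrightarrow> x \<in> mcarrier M \<Longrightarrow> f x \<in> mcarrier N"
  by (simp add: smod_hom_def)
lemma hom_add: "smod_hom M N f \<Longrightarrow> x \<in> mcarrier M \<Longrightarrow> y \<in> mcarrier M \<Longrightarrow> f (madd M x y) = madd N (f x) (f y)"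
  by (simp add: smod_hom_def)
lemma hom_zero: "smod_hom M N f \<Longrightarrow> f (mzero M) = mzero N"
  by (simp add: smod_hom_def)
lemma hom_smult: "smod_hom M N f \<Longrightarrow> x \<in> mcarrier M \<Longrightarrow> f (msmult M r x) = msmult N r (f x)"
  by (simp add: smod_hom_def)

lemma sub_sub: "submodule X K \<Longrightarrow> K \<subseteq> mcarrier X" by (simp add: submodule_def)
lemma sub_zero: "submodule X K \<Longrightarrow> mzero X \<in> K" by (simp add: submodule_def)
lemma sub_add: "submodule X K \<Longrightarrow> x \<in> K \<Longrightarrow> y \<in> K \<Longrightarrow> madd X x y \<in> K" by (simp add: submodule_def)
lemma sub_smult: "submodule X K \<Longrightarrow> x \<in> K \<Longrightarrow> msmult X r x \<in> K" by (simp add: submodule_def)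

section \<open>quotient relation\<close>

context
  fixes X :: "('r::comm_semiring_1, 'a) smod" and K
  assumes X: "semimodule X" and K: "submodule X K"
begin

lemma Kc: "k \<in> K \<Longrightarrow> k \<in> mcarrier X" using sub_sub[OF K] by blast

lemma qrel_refl: "x \<in> mcarrier X \<Longrightarrow> qrel X K x x"
  unfolding qrel_def using sub_zero[OF K] by blast

lemma qrel_sym: "qrel X K x y \<Longrightarrow> qrel X K y x"
  unfolding qrel_def by metis

lemma qrel_trans: assumes "qrel X K x y" "qrel X K y z" shows "qrel X K x z"
proof -
  from assms obtain k1 k2 k3 k4 where k: "k1 \<in> K" "k2 \<in> K" "k3 \<in> K" "k4 \<in> K"
    and e1: "madd X x k1 = madd X y k2" and e2: "madd X y k3 = madd X z k4"
    and c: "x \<in> mcarrier X" "y \<in> mcarrier X" "z \<in> mcarrier X"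
    unfolding qrel_def by blast
  have kc: "k1 \<in> mcarrier X" "k2 \<in> mcarrier X" "k3 \<in> mcarrier X" "k4 \<in> mcarrier X" using k Kc by auto
  have "madd X x (madd X k1 k3) = madd X (madd X x k1) k3" using c kc X by (simp add: sm_simps)
  also have "\<dots> = madd X (madd X y k3) k2" unfolding e1 using c kc X by (simp add: sm_simps)
  also have "\<dots> = madd X z (madd X k4 k2)" unfolding e2 using c kc X by (simp add: sm_simps)
  finally show ?thesis unfolding qrel_def using c k sub_add[OF K] by blast
qed

lemma qclass_mem: "y \<in> qclass X K x \<longleftrightarrow> qrel X K x y"
  by (simp add: qclass_def)

lemma qclass_eqI: "qrel X K x y \<Longrightarrow> qclass X K x = qclass X K y"
  unfolding qclass_def using qrel_sym qrel_trans by blast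

lemma qclass_eqD: "qclass X K x = qclass X K y \<Longrightarrow> x \<in> mcarrier X \<Longrightarrow> qrel X K x y"
  unfolding qclass_def using qrel_sym qrel_refl
  by (metis mem_Collect_eq)

lemma sel_qclass: assumes "x \<in> mcarrier X"
  shows "qrel X K x (SOME a. a \<in> qclass X K x)"
proof -
  have "x \<in> qclass X K x" using qclass_mem qrel_refl assms by blast
  then have "(SOME a. a \<in> qclass X K x) \<in> qclass X K x" by (rule someI)
  then show ?thesis using qclass_mem by blast
qed

lemma sel_carrier: "x \<in> mcarrier X \<Longrightarrow> (SOME a. a \<in> qclass X K x) \<in> mcarrier X"
  using sel_qclass[of x] unfolding qrel_def by blast

lemma qclass_sel: "x \<in> mcarrier X \<Longrightarrow> qclass X K (SOME a. a \<in> qclass X K x) = qclass X K x"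
  using qclass_eqI[OF sel_qclass[of x]] by simp

lemma qrel_add: assumes "qrel X K x x'" "qrel X K y y'"
  shows "qrel X K (madd X x y) (madd X x' y')"
proof -
  from assms obtain k1 k2 k3 k4 where k: "k1 \<in> K" "k2 \<in> K" "k3 \<in> K" "k4 \<in> K"
    and e1: "madd X x k1 = madd X x' k2" and e2: "madd X y k3 = madd X y' k4"
    and c: "x \<in> mcarrier X" "y \<in> mcarrier X" "x' \<in> mcarrier X" "y' \<in> mcarrier X"
    unfolding qrel_def by blast
  have kc: "k1 \<in> mcarrier X" "k2 \<in> mcarrier X" "k3 \<in> mcarrier X" "k4 \<in> mcarrier X" using k Kc by auto
  have "madd X (madd X x y) (madd X k1 k3) = madd X (madd X x k1) (madd X y k3)" using c kc X by (simp add: sm_simps)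
  also have "\<dots> = madd X (madd X x' y') (madd X k2 k4)" unfolding e1 e2 using c kc X by (simp add: sm_simps)
  finally show ?thesis unfolding qrel_def using c k sub_add[OF K] X by (blast intro: sm_add_closed)
qed

lemma qrel_smult: assumes "qrel X K x x'"
  shows "qrel X K (msmult X r x) (msmult X r x')"
proof -
  from assms obtain k1 k2 where k: "k1 \<in> K" "k2 \<in> K"
    and e1: "madd X x k1 = madd X x' k2"
    and c: "x \<in> mcarrier X" "x' \<in> mcarrier X"
    unfolding qrel_def by blast
  have kc: "k1 \<in> mcarrier X" "k2 \<in> mcarrier X" using k Kc by auto
  have "madd X (msmult X r x) (msmult X r k1) = madd X (msmult X r x') (msmult X r k2)"
    using e1 c kc X by (metis sm_smult_add)
  then show ?thesis unfolding qrel_def using c k sub_smult[OF K] X by (blast intro: sm_smult_closed)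
qed

lemma q_add: "x \<in> mcarrier X \<Longrightarrow> y \<in> mcarrier X \<Longrightarrow>
  madd (quotient X K) (qclass X K x) (qclass X K y) = qclass X K (madd X x y)"
  unfolding quotient_def smod.simps
  by (rule qclass_eqI, rule qrel_add) (simp_all add: qrel_sym sel_qclass)

lemma q_smult: "x \<in> mcarrier X \<Longrightarrow>
  msmult (quotient X K) r (qclass X K x) = qclass X K (msmult X r x)"
  unfolding quotient_def smod.simps
  by (rule qclass_eqI, rule qrel_smult) (simp_all add: qrel_sym sel_qclass)

lemma q_zero: "mzero (quotient X K) = qclass X K (mzero X)"
  by (simp add: quotient_def)
lemma q_carrier: "mcarrier (quotient X K) = qclass X K ` mcarrier X"
  by (simp add: quotient_def)

lemma q_semimodule: "semimodule (quotient X K)"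
  unfolding semimodule_def q_carrier q_zero
proof (intro conjI)
  note c = sm_zero[OF X] sm_add_closed[OF X] sm_smult_closed[OF X]
  show "qclass X K (mzero X) \<in> qclass X K ` mcarrier X" using c by blast
  show "\<forall>x\<in>qclass X K ` mcarrier X. \<forall>y\<in>qclass X K ` mcarrier X. madd (quotient X K) x y \<in> qclass X K ` mcarrier X"
    using c by (auto simp: q_add)
  show "\<forall>r. \<forall>x\<in>qclass X K ` mcarrier X. msmult (quotient X K) r x \<in> qclass X K ` mcarrier X"
    using c by (auto simp: q_smult)
  show "\<forall>x\<in>qclass X K ` mcarrier X. \<forall>y\<in>qclass X K ` mcarrier X. \<forall>z\<in>qclass X K ` mcarrier X.
     madd (quotient X K) (madd (quotient X K) x y) z = madd (quotient X K) x (madd (quotient X K) y z)"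
    using c by (auto simp: q_add sm_assoc[OF X])
  show "\<forall>x\<in>qclass X K ` mcarrier X. \<forall>y\<in>qclass X K ` mcarrier X. madd (quotient X K) x y = madd (quotient X K) y x"
    proof (intro ballI)
    fix A B assume "A \<in> qclass X K ` mcarrier X" "B \<in> qclass X K ` mcarrier X"
    then obtain a b where "a \<in> mcarrier X" "b \<in> mcarrier X" "A = qclass X K a" "B = qclass X K b" by blast
    then show "madd (quotient X K) A B = madd (quotient X K) B A" by (simp add: q_add sm_comm[OF X])
  qed
  show "\<forall>x\<in>qclass X K ` mcarrier X. madd (quotient X K) x (qclass X K (mzero X)) = x"
    using c by (auto simp: q_add sm_rzero[OF X])
  show "\<forall>r. \<forall>x\<in>qclass X K ` mcarrier X. \<forall>y\<in>qclass X K ` mcarrier X.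
     msmult (quotient X K) r (madd (quotient X K) x y) = madd (quotient X K) (msmult (quotient X K) r x) (msmult (quotient X K) r y)"
    using c by (auto simp: q_add q_smult sm_smult_add[OF X])
  show "\<forall>r s. \<forall>x\<in>qclass X K ` mcarrier X. msmult (quotient X K) (r + s) x = madd (quotient X K) (msmult (quotient X K) r x) (msmult (quotient X K) s x)"
    using c by (auto simp: q_add q_smult sm_add_smult[OF X])
  show "\<forall>r s. \<forall>x\<in>qclass X K ` mcarrier X. msmult (quotient X K) (r * s) x = msmult (quotient X K) r (msmult (quotient X K) s x)"
    using c by (auto simp: q_smult sm_mult_smult[OF X])
  show "\<forall>x\<in>qclass X K ` mcarrier X. msmult (quotient X K) 1 x = x"
    using c by (auto simp: q_smult sm_one[OF X])
  show "\<forall>x\<in>qclass X K ` mcarrier X. msmult (quotient X K) 0 x = qclass X K (mzero X)"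
    using c by (auto simp: q_smult sm_zsmult[OF X])
  show "\<forall>r. msmult (quotient X K) r (qclass X K (mzero X)) = qclass X K (mzero X)"
    using c by (auto simp: q_smult sm_smultz[OF X])
qed

lemma q_hom: "smod_hom X (quotient X K) (qclass X K)"
  unfolding smod_hom_def q_carrier q_zero using sm_zero[OF X] sm_add_closed[OF X] sm_smult_closed[OF X] by (simp add: q_add q_smult)

end



lemma const_on_class:
  assumes X: "semimodule X" and K: "submodule X K" and Y: "semimodule Y"
    and h: "smod_hom X Y h" and hK: "\<forall>k\<in>K. h k = mzero Y" and r: "qrel X K x y"
  shows "h x = h y"
proof -
  from r obtain k k' where k: "k \<in> K" "k' \<in> K" and e: "madd X x k = madd X y k'"
    and c: "x \<in> mcarrier X" "y \<in> mcarrier X" unfolding qrel_def by blast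
  have kc: "k \<in> mcarrier X" "k' \<in> mcarrier X" using k sub_sub[OF K] by auto
  have "h x = madd Y (h x) (h k)" using hK k sm_rzero[OF Y] hom_closed[OF h] c by simp
  also have "\<dots> = h (madd X x k)" using hom_add[OF h] c kc by simp
  also have "\<dots> = h (madd X y k')" using e by simp
  also have "\<dots> = madd Y (h y) (h k')" using hom_add[OF h] c kc by simp
  also have "\<dots> = h y" using hK k sm_rzero[OF Y] hom_closed[OF h] c by simp
  finally show ?thesis .
qed

lemma q_rep: "A \<in> mcarrier (quotient X K) \<Longrightarrow> \<exists>x\<in>mcarrier X. A = qclass X K x"
  by (auto simp: quotient_def)

lemma factor:
  assumes X: "semimodule X" and K: "submodule X K" and P: "semimodule P"
    and h: "smod_hom X P h" and hK: "\<forall>k\<in>K. h k = mzero P"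
  shows "smod_hom (quotient X K) P (\<lambda>A. h (SOME a. a \<in> A))"
    and "\<And>x. x \<in> mcarrier X \<Longrightarrow> h (SOME a. a \<in> qclass X K x) = h x"
proof -
  show e: "\<And>x. x \<in> mcarrier X \<Longrightarrow> h (SOME a. a \<in> qclass X K x) = h x"
    using const_on_class[OF X K P h hK] sel_qclass[OF X K] by metis
  note c = sm_zero[OF X] sm_add_closed[OF X] sm_smult_closed[OF X]
  show "smod_hom (quotient X K) P (\<lambda>A. h (SOME a. a \<in> A))"
    unfolding smod_hom_def q_carrier[OF X K] q_zero[OF X K]
    using c by (simp add: q_add[OF X K] q_smult[OF X K] e hom_closed[OF h] hom_add[OF h] hom_smult[OF h] hom_zero[OF h])
qed

lemma qclass_zero_iff:
  assumes X: "semimodule X" and K: "saturated_submodule X K" and x: "x \<in> mcarrier X"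
  shows "qclass X K x = qclass X K (mzero X) \<longleftrightarrow> x \<in> K"
proof
  have Ks: "submodule X K" using K saturated_submodule_def by blast
  assume "qclass X K x = qclass X K (mzero X)"
  then have "qrel X K x (mzero X)" using qclass_eqD[OF X Ks] x by blast
  then obtain k k' where k: "k \<in> K" "k' \<in> K" and e: "madd X x k = madd X (mzero X) k'"
    unfolding qrel_def by blast
  have kc: "k \<in> mcarrier X" "k' \<in> mcarrier X" using k sub_sub[OF Ks] by auto
  have "madd X x k \<in> K" using e k kc sm_lzero[OF X] by simp
  then show "x \<in> K" using K k kc x unfolding saturated_submodule_def by blast
next
  have Ks: "submodule X K" using K saturated_submodule_def by blast
  assume "x \<in> K"
  have "madd X x (mzero X) = madd X (mzero X) x" using sm_comm[OF X] x sm_zero[OF X] by blast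
  then have "qrel X K x (mzero X)" unfolding qrel_def using \<open>x \<in> K\<close> sub_zero[OF Ks] x sm_zero[OF X] by blast
  then show "qclass X K x = qclass X K (mzero X)" by (rule qclass_eqI[OF X Ks])
qed

lemma sel_upd: "mcarrier (X\<lparr>mcarrier := K\<rparr>) = K" "madd (X\<lparr>mcarrier := K\<rparr>) = madd X"
  "mzero (X\<lparr>mcarrier := K\<rparr>) = mzero X" "msmult (X\<lparr>mcarrier := K\<rparr>) = msmult X"
  by simp_all

lemma sub_semimodule:
  assumes X: "semimodule X" and K: "submodule X K"
  shows "semimodule (X\<lparr>mcarrier := K\<rparr>)"
proof -
  have s: "\<And>x. x \<in> K \<Longrightarrow> x \<in> mcarrier X" using sub_sub[OF K] by blast
  show ?thesis
    unfolding semimodule_def sel_upd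
    apply (intro conjI)
    apply (rule sub_zero[OF K])
    apply (blast intro: sub_add[OF K])
    apply (blast intro: sub_smult[OF K])
    apply (simp add: s sm_assoc[OF X])
    apply (metis s sm_comm[OF X])
    apply (simp add: s sm_rzero[OF X])
    apply (simp add: s sm_smult_add[OF X])
    apply (simp add: s sm_add_smult[OF X])
    apply (simp add: s sm_mult_smult[OF X])
    apply (simp add: s sm_one[OF X])
    apply (simp add: s sm_zsmult[OF X])
    apply (simp add: s sm_smultz[OF X])
    done
qed

lemma cokernel_q:
  assumes X: "semimodule X" and K: "submodule X K"
  shows "is_cokernel TYPE('p) (X\<lparr>mcarrier := K\<rparr>) X (quotient X K) (\<lambda>x. x) (qclass X K)"
  unfolding is_cokernel_def
proof (intro conjI allI impI)
  show "semimodule (X\<lparr>mcarrier := K\<rparr>)" by (rule sub_semimodule[OF X K])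
  show "semimodule X" by (rule X)
  show "semimodule (quotient X K)" by (rule q_semimodule[OF X K])
  show "smod_hom (X\<lparr>mcarrier := K\<rparr>) X (\<lambda>x. x)" unfolding smod_hom_def using sub_sub[OF K] by auto
  show "smod_hom X (quotient X K) (qclass X K)" by (rule q_hom[OF X K])
  show "\<forall>x\<in>mcarrier (X\<lparr>mcarrier := K\<rparr>). qclass X K x = mzero (quotient X K)"
  proof
    fix x assume "x \<in> mcarrier (X\<lparr>mcarrier := K\<rparr>)"
    then have x: "x \<in> K" by simp
    then have xc: "x \<in> mcarrier X" using sub_sub[OF K] by auto
    have "madd X x (mzero X) = madd X (mzero X) x" using sm_comm[OF X] xc sm_zero[OF X] by blast
    then have "qrel X K x (mzero X)" unfolding qrel_def using x sub_zero[OF K] xc sm_zero[OF X] by blast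
    then show "qclass X K x = mzero (quotient X K)" using qclass_eqI[OF X K] q_zero[OF X K] by simp
  qed
  fix P h
  assume H: "semimodule P \<and> smod_hom X P h \<and> (\<forall>x\<in>mcarrier (X\<lparr>mcarrier := K\<rparr>). h x = mzero P)"
  then have P: "semimodule P" and h: "smod_hom X P h" and hK: "\<forall>k\<in>K. h k = mzero P" by auto
  show "\<exists>u. smod_hom (quotient X K) P u \<and> (\<forall>x\<in>mcarrier X. u (qclass X K x) = h x)"
    using factor[OF X K P h hK] by blast
  fix u v assume "smod_hom (quotient X K) P u \<and> smod_hom (quotient X K) P v \<and>
            (\<forall>x\<in>mcarrier X. u (qclass X K x) = h x) \<and> (\<forall>x\<in>mcarrier X. v (qclass X K x) = h x)"
  then show "\<forall>y\<in>mcarrier (quotient X K). u y = v y"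
    by (auto simp: q_carrier[OF X K])
qed

lemma lift_hom:
  assumes P: "semimodule P" and M: "semimodule M" and N: "semimodule N"
    and h: "smod_hom P N h" and i: "smod_hom M N i" and inj: "inj_on i (mcarrier M)"
    and im: "\<forall>x\<in>mcarrier P. h x \<in> i ` mcarrier M"
  shows "smod_hom P M (\<lambda>x. inv_into (mcarrier M) i (h x))"
    and "\<And>x. x \<in> mcarrier P \<Longrightarrow> i (inv_into (mcarrier M) i (h x)) = h x"
    and "\<And>x. x \<in> mcarrier P \<Longrightarrow> inv_into (mcarrier M) i (h x) \<in> mcarrier M"
proof -
  let ?u = "\<lambda>x. inv_into (mcarrier M) i (h x)"
  show c: "\<And>x. x \<in> mcarrier P \<Longrightarrow> ?u x \<in> mcarrier M" using im by (simp add: inv_into_into)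
  show e: "\<And>x. x \<in> mcarrier P \<Longrightarrow> i (?u x) = h x" using im by (simp add: f_inv_into_f)
  have eq: "a = b" if "a \<in> mcarrier M" "b \<in> mcarrier M" "i a = i b" for a b
    using inj that inj_on_def by metis
  show "smod_hom P M ?u"
    unfolding smod_hom_def
  proof (intro conjI ballI allI)
    show "\<And>x. x \<in> mcarrier P \<Longrightarrow> ?u x \<in> mcarrier M" by (rule c)
    fix x y assume x: "x \<in> mcarrier P" and y: "y \<in> mcarrier P"
    show "?u (madd P x y) = madd M (?u x) (?u y)"
    proof (rule eq)
      show "?u (madd P x y) \<in> mcarrier M" using c x y sm_add_closed[OF P] by blast
      show "madd M (?u x) (?u y) \<in> mcarrier M" using c x y sm_add_closed[OF M] by blast
      have "i (?u (madd P x y)) = h (madd P x y)" using e sm_add_closed[OF P] x y by blast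
      also have "\<dots> = madd N (h x) (h y)" using hom_add[OF h] x y by blast
      also have "\<dots> = madd N (i (?u x)) (i (?u y))" using e x y by simp
      also have "\<dots> = i (madd M (?u x) (?u y))" using hom_add[OF i] c x y by simp
      finally show "i (?u (madd P x y)) = i (madd M (?u x) (?u y))" .
    qed
  next
    show "?u (mzero P) = mzero M"
    proof (rule eq)
      show "?u (mzero P) \<in> mcarrier M" using c sm_zero[OF P] by blast
      show "mzero M \<in> mcarrier M" using sm_zero[OF M] by blast
      have "i (?u (mzero P)) = h (mzero P)" using e sm_zero[OF P] by blast
      then show "i (?u (mzero P)) = i (mzero M)" using hom_zero[OF h] hom_zero[OF i] by simp
    qed
  next
    fix r x assume x: "x \<in> mcarrier P"
    show "?u (msmult P r x) = msmult M r (?u x)"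
    proof (rule eq)
      show "?u (msmult P r x) \<in> mcarrier M" using c x sm_smult_closed[OF P] by blast
      show "msmult M r (?u x) \<in> mcarrier M" using c x sm_smult_closed[OF M] by blast
      have "i (?u (msmult P r x)) = h (msmult P r x)" using e sm_smult_closed[OF P] x by blast
      also have "\<dots> = msmult N r (h x)" using hom_smult[OF h] x by blast
      also have "\<dots> = msmult N r (i (?u x))" using e x by simp
      also have "\<dots> = i (msmult M r (?u x))" using hom_smult[OF i] c x by simp
      finally show "i (?u (msmult P r x)) = i (msmult M r (?u x))" .
    qed
  qed
qed

lemma kernel_intro:
  assumes A: "semimodule A" and B: "semimodule B" and C: "semimodule C"
    and f: "smod_hom A B f" and g: "smod_hom B C g" and inj: "inj_on f (mcarrier A)"
    and ker: "\<forall>y\<in>mcarrier B. g y = mzero C \<longleftrightarrow> y \<in> f ` mcarrier A"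
  shows "is_kernel TYPE('p) A B C f g"
  unfolding is_kernel_def
proof (intro conjI allI impI)
  show "\<forall>x\<in>mcarrier A. g (f x) = mzero C" using ker hom_closed[OF f] by blast
  fix P h
  assume H: "semimodule P \<and> smod_hom P B h \<and> (\<forall>x\<in>mcarrier P. g (h x) = mzero C)"
  then have P: "semimodule P" and h: "smod_hom P B h" by auto
  have im: "\<forall>x\<in>mcarrier P. h x \<in> f ` mcarrier A"
    using H ker hom_closed[OF h] by auto
  show "\<exists>u. smod_hom P A u \<and> (\<forall>x\<in>mcarrier P. f (u x) = h x)"
    using lift_hom[OF P A B h f inj im] by blast
  fix u v assume "smod_hom P A u \<and> smod_hom P A v \<and>
            (\<forall>x\<in>mcarrier P. f (u x) = h x) \<and> (\<forall>x\<in>mcarrier P. f (v x) = h x)"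
  then show "\<forall>x\<in>mcarrier P. u x = v x"
    using inj hom_closed unfolding inj_on_def by metis
qed (use assms in auto)




lemma image_sub:
  assumes A: "semimodule A" and f: "smod_hom A B f"
  shows "submodule B (f ` mcarrier A)"
  unfolding submodule_def
proof (intro conjI ballI allI)
  show "f ` mcarrier A \<subseteq> mcarrier B" using hom_closed[OF f] by blast
  show "mzero B \<in> f ` mcarrier A" using hom_zero[OF f] sm_zero[OF A] by (metis image_eqI)
  fix x y assume "x \<in> f ` mcarrier A" "y \<in> f ` mcarrier A"
  then obtain a b where "a \<in> mcarrier A" "b \<in> mcarrier A" "x = f a" "y = f b" by blast
  then show "madd B x y \<in> f ` mcarrier A" using hom_add[OF f] sm_add_closed[OF A] by (metis image_eqI)
next
  fix r x assume "x \<in> f ` mcarrier A"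
  then obtain a where "a \<in> mcarrier A" "x = f a" by blast
  then show "msmult B r x \<in> f ` mcarrier A" using hom_smult[OF f] sm_smult_closed[OF A] by (metis image_eqI)
qed

definition ringmod :: "('r::comm_semiring_1, 'r) smod" where
  "ringmod = \<lparr>mcarrier = UNIV, madd = (+), mzero = 0, msmult = (*)\<rparr>"

lemma ringmod_sm: "semimodule ringmod"
  unfolding semimodule_def ringmod_def by (simp add: algebra_simps)

lemma ringmod_hom: assumes X: "semimodule X" and x: "x \<in> mcarrier X"
  shows "smod_hom ringmod X (\<lambda>r. msmult X r x)"
  unfolding smod_hom_def ringmod_def
  using x by (simp add: sm_smult_closed[OF X] sm_add_smult[OF X] sm_zsmult[OF X] sm_mult_smult[OF X])

lemma kernel_facts:
  fixes M :: "('r::comm_semiring_1, 'a) smod" and N :: "('r, 'b) smod" and Q :: "('r, 'q) smod"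
  assumes K: "is_kernel TYPE('r) M N Q i g"
  shows "inj_on i (mcarrier M)" and "\<forall>n\<in>mcarrier N. g n = mzero Q \<longleftrightarrow> n \<in> i ` mcarrier M"
proof -
  have M: "semimodule M" and N: "semimodule N" and Qs: "semimodule Q" and i: "smod_hom M N i"
    and g: "smod_hom N Q g" and gi: "\<forall>x\<in>mcarrier M. g (i x) = mzero Q"
    and UP: "\<And>(P :: ('r, 'r) smod) h. semimodule P \<Longrightarrow> smod_hom P N h \<Longrightarrow>
        (\<forall>x\<in>mcarrier P. g (h x) = mzero Q) \<Longrightarrow>
        (\<exists>u. smod_hom P M u \<and> (\<forall>x\<in>mcarrier P. i (u x) = h x)) \<and>
        (\<forall>u v. smod_hom P M u \<and> smod_hom P M v \<and>
            (\<forall>x\<in>mcarrier P. i (u x) = h x) \<and> (\<forall>x\<in>mcarrier P. i (v x) = h x) \<longrightarrow>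
            (\<forall>x\<in>mcarrier P. u x = v x))"
    using K unfolding is_kernel_def by blast+
  have gz: "\<forall>x\<in>mcarrier ringmod. g (msmult N x n) = mzero Q" if n: "n \<in> mcarrier N" "g n = mzero Q" for n
    using hom_smult[OF g n(1)] n(2) sm_smultz[OF Qs] by simp
  show "inj_on i (mcarrier M)"
  proof (rule inj_onI)
    fix a b assume a: "a \<in> mcarrier M" and b: "b \<in> mcarrier M" and e: "i a = i b"
    have na: "i a \<in> mcarrier N" using hom_closed[OF i a] .
    have U: "\<forall>u v. smod_hom ringmod M u \<and> smod_hom ringmod M v \<and>
            (\<forall>x\<in>mcarrier ringmod. i (u x) = msmult N x (i a)) \<and> (\<forall>x\<in>mcarrier ringmod. i (v x) = msmult N x (i a)) \<longrightarrow>
            (\<forall>x\<in>mcarrier ringmod. u x = v x)"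
      using UP[OF ringmod_sm ringmod_hom[OF N na] gz[OF na]] gi a by blast
    have "\<forall>x\<in>mcarrier ringmod. msmult M x a = msmult M x b"
      using U[rule_format, of "\<lambda>r. msmult M r a" "\<lambda>r. msmult M r b"] ringmod_hom[OF M a] ringmod_hom[OF M b]
        hom_smult[OF i a] hom_smult[OF i b] e by simp
    then have "msmult M 1 a = msmult M 1 b" by (simp add: ringmod_def)
    then show "a = b" using sm_one[OF M] a b by simp
  qed
  show "\<forall>n\<in>mcarrier N. g n = mzero Q \<longleftrightarrow> n \<in> i ` mcarrier M"
  proof (intro ballI iffI)
    fix n assume n: "n \<in> mcarrier N" and "g n = mzero Q"
    then obtain u where u: "smod_hom ringmod M u" and e: "\<forall>x\<in>mcarrier ringmod. i (u x) = msmult N x n"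
      using UP[OF ringmod_sm ringmod_hom[OF N n] gz] by blast
    have "i (u 1) = n" using e sm_one[OF N n] by (simp add: ringmod_def)
    moreover have "u 1 \<in> mcarrier M" using hom_closed[OF u] by (simp add: ringmod_def)
    ultimately show "n \<in> i ` mcarrier M" by blast
  next
    fix n assume "n \<in> i ` mcarrier M" then show "g n = mzero Q" using gi by blast
  qed
qed




theorem mainTheorem12:
  fixes M :: "('r::comm_semiring_1, 'a) smod" and N :: "('r, 'b) smod"
    and Q :: "('r, 'q) smod" and i :: "'a \<Rightarrow> 'b" and g :: "'b \<Rightarrow> 'q"
    and L :: "'a set"
  assumes normal_mono_i: "is_kernel TYPE('r) M N Q i g"
    and L_sat: "saturated_submodule M L"
  defines "\<pi> \<equiv> qclass M L"
    and "\<pi>' \<equiv> qclass N (i ` L)"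
    and "i' \<equiv> (\<lambda>A. qclass N (i ` L) (i (SOME m. m \<in> A)))"
  shows "saturated_submodule N (i ` L)
    \<and> (\<exists>(K :: ('r, 'a) smod) e. is_cokernel TYPE('p) K M (quotient M L) e \<pi>)
    \<and> (\<exists>(K :: ('r, 'b) smod) e. is_cokernel TYPE('p) K N (quotient N (i ` L)) e \<pi>')
    \<and> (\<forall>m\<in>mcarrier M. i' (\<pi> m) = \<pi>' (i m))
    \<and> (\<exists>(Q' :: ('r, 'b set set) smod) g'.
          is_kernel TYPE('p) (quotient M L) (quotient N (i ` L)) Q' i' g')
    \<and> is_pullback TYPE('p) M N (quotient M L) (quotient N (i ` L)) i \<pi> \<pi>' i'
    \<and> is_pushout TYPE('p) M N (quotient M L) (quotient N (i ` L)) i \<pi> \<pi>' i'"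
proof -
  have M: "semimodule M" and N: "semimodule N" and Qs: "semimodule Q" and ih: "smod_hom M N i"
    and g: "smod_hom N Q g" and gi: "\<forall>x\<in>mcarrier M. g (i x) = mzero Q"
    using normal_mono_i unfolding is_kernel_def by blast+
  have inj: "inj_on i (mcarrier M)" and ker: "\<forall>n\<in>mcarrier N. g n = mzero Q \<longleftrightarrow> n \<in> i ` mcarrier M"
    using kernel_facts[OF normal_mono_i] by blast+
  have injD: "a = b" if "a \<in> mcarrier M" "b \<in> mcarrier M" "i a = i b" for a b
    using inj that inj_on_def by metis
  have Ls: "submodule M L" using L_sat saturated_submodule_def by blast
  have LM: "L \<subseteq> mcarrier M" using sub_sub[OF Ls] .
  have iLs: "submodule N (i ` L)"
    unfolding submodule_def
  proof (intro conjI ballI allI)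
    show "i ` L \<subseteq> mcarrier N" using hom_closed[OF ih] LM by blast
    show "mzero N \<in> i ` L" using hom_zero[OF ih] sub_zero[OF Ls] by (metis image_eqI)
    fix x y assume "x \<in> i ` L" "y \<in> i ` L"
    then obtain a b where "a \<in> L" "b \<in> L" "x = i a" "y = i b" by blast
    then show "madd N x y \<in> i ` L" using hom_add[OF ih] sub_add[OF Ls] LM by (metis image_eqI subsetD)
  next
    fix r x assume "x \<in> i ` L"
    then obtain a where "a \<in> L" "x = i a" by blast
    then show "msmult N r x \<in> i ` L" using hom_smult[OF ih] sub_smult[OF Ls] LM by (metis image_eqI subsetD)
  qed
  have gL: "\<forall>k\<in>i ` L. g k = mzero Q" using gi LM by blast
  have gadd: "g (madd N x y) = g x" if "x \<in> mcarrier N" "y \<in> mcarrier N" "g y = mzero Q" for x y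
    using hom_add[OF g that(1,2)] that(3) sm_rzero[OF Qs] hom_closed[OF g that(1)] by simp
  have sat: "saturated_submodule N (i ` L)"
    unfolding saturated_submodule_def
  proof (intro conjI ballI impI)
    show "submodule N (i ` L)" by (rule iLs)
    fix x y assume x: "x \<in> mcarrier N" and y: "y \<in> mcarrier N" and H: "madd N x y \<in> i ` L \<and> y \<in> i ` L"
    then obtain l l' where l: "l \<in> L" "l' \<in> L" "madd N x y = i l" "y = i l'" by blast
    have "g y = mzero Q" using gL H by blast
    moreover have "g (madd N x y) = mzero Q" using gL H by blast
    ultimately have "g x = mzero Q" using gadd x y by simp
    then obtain a where a: "a \<in> mcarrier M" "x = i a" using ker x by blast
    have "i (madd M a l') = i l" using hom_add[OF ih a(1)] l LM a by auto
    then have "madd M a l' = l" using injD a l LM sm_add_closed[OF M] by blast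
    then have "a \<in> L" using L_sat a l LM unfolding saturated_submodule_def by blast
    then show "x \<in> i ` L" using a by blast
  qed
  have cok1: "\<exists>(K :: ('r, 'a) smod) e. is_cokernel TYPE('p) K M (quotient M L) e \<pi>"
    unfolding \<pi>_def using cokernel_q[OF M Ls] by blast
  have cok2: "\<exists>(K :: ('r, 'b) smod) e. is_cokernel TYPE('p) K N (quotient N (i ` L)) e \<pi>'"
    unfolding \<pi>'_def using cokernel_q[OF N iLs] by blast
  have qrel_map: "qrel N (i ` L) (i x) (i y)" if "qrel M L x y" for x y
  proof -
    from that obtain k k' where k: "k \<in> L" "k' \<in> L" and e: "madd M x k = madd M y k'"
      and c: "x \<in> mcarrier M" "y \<in> mcarrier M" unfolding qrel_def by blast
    have "madd N (i x) (i k) = madd N (i y) (i k')" using e hom_add[OF ih] c k LM by (metis subsetD)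
    then show ?thesis unfolding qrel_def using k c hom_closed[OF ih] by blast
  qed
  have i'cls: "i' (qclass M L m) = qclass N (i ` L) (i m)" if m: "m \<in> mcarrier M" for m
  proof -
    have "qrel N (i ` L) (i m) (i (SOME a. a \<in> qclass M L m))"
      using qrel_map sel_qclass[OF M Ls m] by blast
    then show ?thesis unfolding i'_def using qclass_eqI[OF N iLs] by metis
  qed
  have c4: "\<forall>m\<in>mcarrier M. i' (\<pi> m) = \<pi>' (i m)" using i'cls unfolding \<pi>_def \<pi>'_def by blast
  have inj': "qclass M L a = qclass M L b" if ab: "a \<in> mcarrier M" "b \<in> mcarrier M"
    and e: "qclass N (i ` L) (i a) = qclass N (i ` L) (i b)" for a b
  proof -
    have "qrel N (i ` L) (i a) (i b)" using qclass_eqD[OF N iLs e] hom_closed[OF ih ab(1)] .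
    then obtain l l' where l: "l \<in> L" "l' \<in> L" and e2: "madd N (i a) (i l) = madd N (i b) (i l')"
      unfolding qrel_def by blast
    have "i (madd M a l) = i (madd M b l')" using e2 hom_add[OF ih] ab l LM by (metis subsetD)
    then have "madd M a l = madd M b l'" using injD ab l LM sm_add_closed[OF M] by (metis subsetD)
    then have "qrel M L a b" unfolding qrel_def using ab l by blast
    then show ?thesis by (rule qclass_eqI[OF M Ls])
  qed
  let ?QM = "quotient M L" and ?QN = "quotient N (i ` L)"
  have QM: "semimodule ?QM" by (rule q_semimodule[OF M Ls])
  have QN: "semimodule ?QN" by (rule q_semimodule[OF N iLs])
  have pih: "smod_hom M ?QM \<pi>" unfolding \<pi>_def by (rule q_hom[OF M Ls])
  have pi'h: "smod_hom N ?QN \<pi>'" unfolding \<pi>'_def by (rule q_hom[OF N iLs])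
  have i'h: "smod_hom ?QM ?QN i'"
    unfolding smod_hom_def q_carrier[OF M Ls] q_zero[OF M Ls]
  proof (intro conjI ballI allI)
    fix A assume "A \<in> qclass M L ` mcarrier M"
    then obtain a where a: "a \<in> mcarrier M" "A = qclass M L a" by blast
    then show "i' A \<in> mcarrier ?QN" using i'cls q_carrier[OF N iLs] hom_closed[OF ih] by simp
    fix B assume "B \<in> qclass M L ` mcarrier M"
    then obtain b where b: "b \<in> mcarrier M" "B = qclass M L b" by blast
    show "i' (madd ?QM A B) = madd ?QN (i' A) (i' B)"
      using a b by (simp add: q_add[OF M Ls] q_add[OF N iLs] i'cls sm_add_closed[OF M] hom_add[OF ih] hom_closed[OF ih])
  next
    show "i' (qclass M L (mzero M)) = mzero ?QN"
      by (simp add: i'cls sm_zero[OF M] hom_zero[OF ih] q_zero[OF N iLs])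
  next
    fix r A assume "A \<in> qclass M L ` mcarrier M"
    then obtain a where a: "a \<in> mcarrier M" "A = qclass M L a" by blast
    then show "i' (msmult ?QM r A) = msmult ?QN r (i' A)"
      by (simp add: q_smult[OF M Ls] q_smult[OF N iLs] i'cls sm_smult_closed[OF M] hom_smult[OF ih] hom_closed[OF ih])
  qed
  define K' where "K' = i' ` mcarrier ?QM"
  have K's: "submodule ?QN K'" unfolding K'_def by (rule image_sub[OF QM i'h])
  have gz: "g n = mzero Q" if n: "n \<in> mcarrier N" and nK: "qclass N (i ` L) n \<in> K'" for n
  proof -
    from nK obtain m where m: "m \<in> mcarrier M" "qclass N (i ` L) n = qclass N (i ` L) (i m)"
      unfolding K'_def q_carrier[OF M Ls] using i'cls by auto
    have "qrel N (i ` L) n (i m)" using qclass_eqD[OF N iLs m(2) n] .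
    then have "g n = g (i m)" using const_on_class[OF N iLs Qs g gL] by blast
    then show ?thesis using gi m by simp
  qed
  have K'sat: "saturated_submodule ?QN K'"
    unfolding saturated_submodule_def
  proof (intro conjI ballI impI)
    show "submodule ?QN K'" by (rule K's)
    fix X Y assume X: "X \<in> mcarrier ?QN" and Y: "Y \<in> mcarrier ?QN" and H: "madd ?QN X Y \<in> K' \<and> Y \<in> K'"
    obtain x where x: "x \<in> mcarrier N" "X = qclass N (i ` L) x" using X q_carrier[OF N iLs] by auto
    obtain y where y: "y \<in> mcarrier N" "Y = qclass N (i ` L) y" using Y q_carrier[OF N iLs] by auto
    have "g y = mzero Q" using gz y H by blast
    moreover have "g (madd N x y) = mzero Q"
      using gz[of "madd N x y"] H x y q_add[OF N iLs] sm_add_closed[OF N] by simp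
    ultimately have "g x = mzero Q" using gadd x y by simp
    then obtain a where a: "a \<in> mcarrier M" "x = i a" using ker x by blast
    have "X = i' (qclass M L a)" using x a i'cls by simp
    then show "X \<in> K'" unfolding K'_def q_carrier[OF M Ls] using a by blast
  qed
  have ki': "is_kernel TYPE('p) ?QM ?QN (quotient ?QN K') i' (qclass ?QN K')"
  proof (rule kernel_intro[OF QM QN q_semimodule[OF QN K's] i'h q_hom[OF QN K's]])
    show "inj_on i' (mcarrier ?QM)"
    proof (rule inj_onI)
      fix A B assume "A \<in> mcarrier ?QM" "B \<in> mcarrier ?QM" and e: "i' A = i' B"
      then obtain a b where ab: "a \<in> mcarrier M" "b \<in> mcarrier M" "A = qclass M L a" "B = qclass M L b"
        using q_carrier[OF M Ls] by auto
      have "qclass N (i ` L) (i a) = qclass N (i ` L) (i b)" using e ab i'cls by metis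
      then show "A = B" using inj'[OF ab(1,2)] ab by simp
    qed
    show "\<forall>y\<in>mcarrier ?QN. qclass ?QN K' y = mzero (quotient ?QN K') \<longleftrightarrow> y \<in> i' ` mcarrier ?QM"
      using qclass_zero_iff[OF QN K'sat] q_zero[OF QN K's] unfolding K'_def by simp
  qed
  have c5: "\<exists>(Q' :: ('r, 'b set set) smod) g'. is_kernel TYPE('p) ?QM ?QN Q' i' g'"
    using ki' by blast
  have comm: "\<forall>x\<in>mcarrier M. \<pi>' (i x) = i' (\<pi> x)" using c4 by simp
  have pb: "is_pullback TYPE('p) M N ?QM ?QN i \<pi> \<pi>' i'"
    unfolding is_pullback_def
  proof (intro conjI allI impI)
    fix P h k
    assume H: "semimodule P \<and> smod_hom P N h \<and> smod_hom P ?QM k \<and> (\<forall>x\<in>mcarrier P. \<pi>' (h x) = i' (k x))"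
    then have P: "semimodule P" and h: "smod_hom P N h" and k: "smod_hom P ?QM k"
      and e: "\<forall>x\<in>mcarrier P. \<pi>' (h x) = i' (k x)" by auto
    have rep: "\<exists>m\<in>mcarrier M. k x = qclass M L m \<and> qclass N (i ` L) (h x) = qclass N (i ` L) (i m)"
      if x: "x \<in> mcarrier P" for x
    proof -
      obtain m where m: "m \<in> mcarrier M" "k x = qclass M L m"
        using hom_closed[OF k x] q_carrier[OF M Ls] by auto
      then show ?thesis using e x i'cls unfolding \<pi>'_def by auto
    qed
    have im: "\<forall>x\<in>mcarrier P. h x \<in> i ` mcarrier M"
    proof
      fix x assume x: "x \<in> mcarrier P"
      obtain m where m: "m \<in> mcarrier M" "qclass N (i ` L) (h x) = qclass N (i ` L) (i m)"
        using rep[OF x] by blast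
      have "qrel N (i ` L) (h x) (i m)" using qclass_eqD[OF N iLs m(2) hom_closed[OF h x]] .
      then have "g (h x) = g (i m)" using const_on_class[OF N iLs Qs g gL] by blast
      then show "h x \<in> i ` mcarrier M" using gi m ker hom_closed[OF h x] by simp
    qed
    note lh = lift_hom[OF P M N h ih inj im]
    let ?u = "\<lambda>x. inv_into (mcarrier M) i (h x)"
    show "\<exists>u. smod_hom P M u \<and> (\<forall>x\<in>mcarrier P. i (u x) = h x \<and> \<pi> (u x) = k x)"
    proof (intro exI conjI ballI)
      show "smod_hom P M ?u" by (rule lh(1))
      fix x assume x: "x \<in> mcarrier P"
      show "i (?u x) = h x" using lh(2)[OF x] .
      obtain m where m: "m \<in> mcarrier M" "k x = qclass M L m" "qclass N (i ` L) (h x) = qclass N (i ` L) (i m)"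
        using rep[OF x] by blast
      have "qclass N (i ` L) (i (?u x)) = qclass N (i ` L) (i m)" using lh(2)[OF x] m by simp
      then have "qclass M L (?u x) = qclass M L m" using inj' lh(3)[OF x] m(1) by blast
      then show "\<pi> (?u x) = k x" unfolding \<pi>_def using m by simp
    qed
    fix u v assume "smod_hom P M u \<and> smod_hom P M v \<and>
            (\<forall>x\<in>mcarrier P. i (u x) = h x \<and> \<pi> (u x) = k x) \<and>
            (\<forall>x\<in>mcarrier P. i (v x) = h x \<and> \<pi> (v x) = k x)"
    then show "\<forall>x\<in>mcarrier P. u x = v x" using injD hom_closed by metis
  qed (use M N QM QN ih pih pi'h i'h comm in auto)
  have po: "is_pushout TYPE('p) M N ?QM ?QN i \<pi> \<pi>' i'"
    unfolding is_pushout_def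
  proof (intro conjI allI impI)
    fix P h k
    assume H: "semimodule P \<and> smod_hom N P h \<and> smod_hom ?QM P k \<and> (\<forall>x\<in>mcarrier M. h (i x) = k (\<pi> x))"
    then have P: "semimodule P" and h: "smod_hom N P h" and k: "smod_hom ?QM P k"
      and e: "\<forall>x\<in>mcarrier M. h (i x) = k (\<pi> x)" by auto
    have hL: "\<forall>y\<in>i ` L. h y = mzero P"
    proof
      fix y assume "y \<in> i ` L"
      then obtain l where l: "l \<in> L" "y = i l" by blast
      have "qclass M L l = qclass M L (mzero M)" using qclass_zero_iff[OF M L_sat] l LM by blast
      then have "h y = k (mzero ?QM)" using e l LM q_zero[OF M Ls] unfolding \<pi>_def by auto
      then show "h y = mzero P" using hom_zero[OF k] by simp
    qed
    note f = factor[OF N iLs P h hL]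
    let ?u = "\<lambda>A. h (SOME a. a \<in> A)"
    show "\<exists>u. smod_hom ?QN P u \<and> (\<forall>x\<in>mcarrier N. u (\<pi>' x) = h x) \<and> (\<forall>x\<in>mcarrier ?QM. u (i' x) = k x)"
    proof (intro exI conjI ballI)
      show "smod_hom ?QN P ?u" by (rule f(1))
      fix x assume "x \<in> mcarrier N" then show "?u (\<pi>' x) = h x" unfolding \<pi>'_def using f(2) by blast
    next
      fix C assume "C \<in> mcarrier ?QM"
      then obtain m where m: "m \<in> mcarrier M" "C = qclass M L m" using q_carrier[OF M Ls] by auto
      have "?u (i' C) = h (i m)" using m i'cls f(2) hom_closed[OF ih] by simp
      then show "?u (i' C) = k C" using e m unfolding \<pi>_def by simp
    qed
    fix u v assume A: "smod_hom ?QN P u \<and> smod_hom ?QN P v \<and>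
            (\<forall>x\<in>mcarrier N. u (\<pi>' x) = h x) \<and> (\<forall>x\<in>mcarrier ?QM. u (i' x) = k x) \<and>
            (\<forall>x\<in>mcarrier N. v (\<pi>' x) = h x) \<and> (\<forall>x\<in>mcarrier ?QM. v (i' x) = k x)"
    show "\<forall>y\<in>mcarrier ?QN. u y = v y"
    proof
      fix y assume "y \<in> mcarrier ?QN"
      then obtain n where n: "n \<in> mcarrier N" "y = qclass N (i ` L) n" using q_carrier[OF N iLs] by auto
      then show "u y = v y" using A unfolding \<pi>'_def by simp
    qed
  qed (use M N QM QN ih pih pi'h i'h comm in auto)
  show ?thesis using sat cok1 cok2 c4 c5 pb po by blast
qed


end
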